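(* Let $\Lambda\subset I_N$ and let $k$ be a time level. For every $\phi\in V^k(\Lambda)^d$ and $\psi\in V^k(\Lambda)$, $$(\psi,\nabla_h\cdot\phi)_\Lambda=-(\nabla_h\psi,\phi)_\Lambda,\qquad -(\psi,\Delta_h\psi)_\Lambda=|\psi|_{1,k,\Lambda}^2,$$ where for $i\in\Lambda$: $(\nabla_h\cdot\phi)_i=\sum_{j\in\Lambda}V_j(\phi_j+\phi_i)\cdot\nabla w_h(|x^k_i-x^k_j|)$, $(\nabla_h\psi)_i=\sum_{j\in\Lambda}V_j(\psi_j-\psi_i)\nabla w_h(|x^k_i-x^k_j|)$, and $(\Delta_h\psi)_i=2\sum_{j\in\Lambda\setminus\{i\}}V_j\frac{\psi_i-\psi_j}{|x^k_i-x^k_j|}\frac{x^k_i-x^k_j}{|x^k_i-x^k_j|}\cdot\nabla w_h(|x^k_i-x^k_j|)$.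
   Context: Let $d\in\{2,3\}$. Reference weight function $w\in C^2([0,\infty))$ with some $r_0>0$: $w>0$ on $(0,r_0)$, $w=0$ on $[r_0,\infty)$, $\dot w<0$ on $(0,r_0)$, $\dot w(0)=0$, $\dot w=0$ on $[r_0,\infty)$, $\int_{\mathbb{R}^d}w(|x|)dx=1$. For $h>0$, $w_h(r)=h^{-d}w(r/h)$ with derivative $\dot w_h$; for $x\ne y$, $\nabla w_h(|x-y|)=\dot w_h(|x-y|)\frac{x-y}{|x-y|}$, and $\nabla w_h(0):=0$. $N\in\mathbb{N}$, $I_N=\{1,\dots,N\}$, particle volumes $V_1,\dots,V_N>0$, pairwise distinct particle positions $x^k_1,\dots,x^k_N\in\mathbb{R}^d$ at level $k$. $V^k(\Lambda)$ is the space of real functions on $\{x^k_i\}_{i\in\Lambda}$ (values $\phi_i$), $V^k(\Lambda)^m$ the $\mathbb{R}^m$-valued ones. Discrete inner product $(\phi,\varphi)_\Lambda=\sum_{i\in\Lambda}V_i\,\phi_i\cdot\varphi_i$; discrete semi-norm $|\psi|_{1,k,\Lambda}=\big(\sum_{i\in\Lambda}V_i\sum_{j\in\Lambda\setminus\{i\}}V_j\frac{|\psi_i-\psi_j|^2}{|x^k_i-x^k_j|}|\dot w_h(|x^k_i-x^k_j|)|\big)^{1/2}$. *)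

theory Defs
  imports "HOL-Analysis.Analysis"
begin

text \<open>Derivative of the scaled kernel w_h(r) = h^(-d) w(r/h), given the derivative dw of w.\<close>
definition dwh :: "nat \<Rightarrow> real \<Rightarrow> (real \<Rightarrow> real) \<Rightarrow> real \<Rightarrow> real" where
  "dwh d h dw r = dw (r / h) / h ^ (d + 1)"

text \<open>Gradient of w_h(|x - y|), set to 0 for x = y.\<close>
definition gradwh :: "real \<Rightarrow> (real \<Rightarrow> real) \<Rightarrow> real^'n \<Rightarrow> real^'n \<Rightarrow> real^'n" where
  "gradwh h dw x y = (if x = y then 0
     else dwh CARD('n) h dw (norm (x - y)) *\<^sub>R ((1 / norm (x - y)) *\<^sub>R (x - y)))"

definition ip_scal :: "nat set \<Rightarrow> (nat \<Rightarrow> real) \<Rightarrow> (nat \<Rightarrow> real) \<Rightarrow> (nat \<Rightarrow> real) \<Rightarrow> real" where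
  "ip_scal \<Lambda> V \<phi> \<psi> = (\<Sum>i\<in>\<Lambda>. V i * (\<phi> i * \<psi> i))"

definition ip_vec :: "nat set \<Rightarrow> (nat \<Rightarrow> real) \<Rightarrow> (nat \<Rightarrow> real^'n) \<Rightarrow> (nat \<Rightarrow> real^'n) \<Rightarrow> real" where
  "ip_vec \<Lambda> V \<phi> \<psi> = (\<Sum>i\<in>\<Lambda>. V i * (\<phi> i \<bullet> \<psi> i))"

definition div_h :: "real \<Rightarrow> (real \<Rightarrow> real) \<Rightarrow> nat set \<Rightarrow> (nat \<Rightarrow> real)
    \<Rightarrow> (nat \<Rightarrow> real^'n) \<Rightarrow> (nat \<Rightarrow> real^'n) \<Rightarrow> nat \<Rightarrow> real" where
  "div_h h dw \<Lambda> V x \<phi> i = (\<Sum>j\<in>\<Lambda>. V j * ((\<phi> j + \<phi> i) \<bullet> gradwh h dw (x i) (x j)))"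

definition grad_h :: "real \<Rightarrow> (real \<Rightarrow> real) \<Rightarrow> nat set \<Rightarrow> (nat \<Rightarrow> real)
    \<Rightarrow> (nat \<Rightarrow> real^'n) \<Rightarrow> (nat \<Rightarrow> real) \<Rightarrow> nat \<Rightarrow> real^'n" where
  "grad_h h dw \<Lambda> V x \<psi> i = (\<Sum>j\<in>\<Lambda>. (V j * (\<psi> j - \<psi> i)) *\<^sub>R gradwh h dw (x i) (x j))"

definition lap_h :: "real \<Rightarrow> (real \<Rightarrow> real) \<Rightarrow> nat set \<Rightarrow> (nat \<Rightarrow> real)
    \<Rightarrow> (nat \<Rightarrow> real^'n) \<Rightarrow> (nat \<Rightarrow> real) \<Rightarrow> nat \<Rightarrow> real" where
  "lap_h h dw \<Lambda> V x \<psi> i = 2 * (\<Sum>j\<in>\<Lambda> - {i}. V j * ((\<psi> i - \<psi> j) / norm (x i - x j))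
       * (((1 / norm (x i - x j)) *\<^sub>R (x i - x j)) \<bullet> gradwh h dw (x i) (x j)))"

definition semi1 :: "real \<Rightarrow> (real \<Rightarrow> real) \<Rightarrow> nat set \<Rightarrow> (nat \<Rightarrow> real)
    \<Rightarrow> (nat \<Rightarrow> real^'n) \<Rightarrow> (nat \<Rightarrow> real) \<Rightarrow> real" where
  "semi1 h dw \<Lambda> V x \<psi> = sqrt (\<Sum>i\<in>\<Lambda>. V i * (\<Sum>j\<in>\<Lambda> - {i}. V j * ((\<psi> i - \<psi> j)\<^sup>2 / norm (x i - x j))
       * \<bar>dwh CARD('n) h dw (norm (x i - x j))\<bar>))"

end

theory Submission
  imports Defs
begin

lemma gradwh_anti: "gradwh h dw y x = - gradwh h dw x y"
  unfolding gradwh_def by (auto simp: norm_minus_commute scaleR_right_diff_distrib)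

lemma part1:
  assumes fin: "finite \<Lambda>"
  shows "ip_scal \<Lambda> V \<psi> (div_h h dw \<Lambda> V x \<phi>) = - ip_vec \<Lambda> V (grad_h h dw \<Lambda> V x \<psi>) \<phi>"
proof -
  have L: "ip_scal \<Lambda> V \<psi> (div_h h dw \<Lambda> V x \<phi>) =
     (\<Sum>i\<in>\<Lambda>. \<Sum>j\<in>\<Lambda>. V i*\<psi> i*V j*(\<phi> j \<bullet> gradwh h dw (x i) (x j))) + (\<Sum>i\<in>\<Lambda>. \<Sum>j\<in>\<Lambda>. V i*\<psi> i*V j*(\<phi> i \<bullet> gradwh h dw (x i) (x j)))"
    unfolding ip_scal_def div_h_def
    by (simp add: sum_distrib_left sum.distrib[symmetric] inner_add_left algebra_simps)
  have t: "a * ((b*(c - d)) * e) = a*b*c*e - a*d*b*e" for a b c d e :: real by (simp add: algebra_simps)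
  have R0: "ip_vec \<Lambda> V (grad_h h dw \<Lambda> V x \<psi>) \<phi> =
     (\<Sum>i\<in>\<Lambda>. \<Sum>j\<in>\<Lambda>. V i*V j*\<psi> j*(gradwh h dw (x i) (x j) \<bullet> \<phi> i) - V i*\<psi> i*V j*(gradwh h dw (x i) (x j) \<bullet> \<phi> i))"
    unfolding ip_vec_def grad_h_def inner_sum_left inner_scaleR_left sum_distrib_left
    by (intro sum.cong refl) (simp add: algebra_simps)
  have R: "ip_vec \<Lambda> V (grad_h h dw \<Lambda> V x \<psi>) \<phi> =
     (\<Sum>i\<in>\<Lambda>. \<Sum>j\<in>\<Lambda>. V i*V j*\<psi> j*(\<phi> i \<bullet> gradwh h dw (x i) (x j))) - (\<Sum>i\<in>\<Lambda>. \<Sum>j\<in>\<Lambda>. V i*\<psi> i*V j*(\<phi> i \<bullet> gradwh h dw (x i) (x j)))"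
    unfolding R0 sum_subtractf by (simp only: inner_commute)
  have S: "(\<Sum>i\<in>\<Lambda>. \<Sum>j\<in>\<Lambda>. V i*\<psi> i*V j*(\<phi> j \<bullet> gradwh h dw (x i) (x j))) = - (\<Sum>i\<in>\<Lambda>. \<Sum>j\<in>\<Lambda>. V i*V j*\<psi> j*(\<phi> i \<bullet> gradwh h dw (x i) (x j)))"
  proof -
    have "(\<Sum>i\<in>\<Lambda>. \<Sum>j\<in>\<Lambda>. V i*\<psi> i*V j*(\<phi> j \<bullet> gradwh h dw (x i) (x j))) = (\<Sum>j\<in>\<Lambda>. \<Sum>i\<in>\<Lambda>. V i*\<psi> i*V j*(\<phi> j \<bullet> gradwh h dw (x i) (x j)))"
      by (rule sum.swap)
    also have "\<dots> = (\<Sum>j\<in>\<Lambda>. \<Sum>i\<in>\<Lambda>. - (V j*V i*\<psi> i*(\<phi> j \<bullet> gradwh h dw (x j) (x i))))"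
      by (intro sum.cong refl) (subst gradwh_anti, simp add: algebra_simps)
    finally show ?thesis by (simp add: sum_negf)
  qed
  show ?thesis using L R S by simp
qed

lemma part2:
  assumes fin: "finite \<Lambda>" and inj: "inj_on x \<Lambda>"
    and Vp: "\<forall>i\<in>\<Lambda>. V i > 0"
    and dwn: "\<forall>r>0. dwh CARD('n) h dw r \<le> 0"
  shows "- ip_scal \<Lambda> V \<psi> (lap_h h dw \<Lambda> V (x :: nat \<Rightarrow> real^'n) \<psi>) = (semi1 h dw \<Lambda> V x \<psi>)\<^sup>2"
proof -
  define a where "a i j = V i * V j * dwh CARD('n) h dw (norm (x i - x j)) / norm (x i - x j)" for i j
  have asym: "a j i = a i j" for i j unfolding a_def by (simp add: norm_minus_commute mult.commute)
  have aii: "a i i = 0" for i unfolding a_def by simp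
  have e: "((1 / norm (x i - x j)) *\<^sub>R (x i - x j)) \<bullet> gradwh h dw (x i) (x j) = dwh CARD('n) h dw (norm (x i - x j))"
    if "i \<in> \<Lambda>" "j \<in> \<Lambda>" "j \<noteq> i" for i j
  proof -
    have "x i \<noteq> x j" using inj that by (metis inj_onD)
    then have n: "norm (x i - x j) \<noteq> 0" by simp
    have g: "((1 / norm v) *\<^sub>R v) \<bullet> (c *\<^sub>R ((1 / norm v) *\<^sub>R v)) = c" if "v \<noteq> 0" for v :: "real^'n" and c
      using that by (simp add: inner_commute dot_square_norm power2_eq_square)
    show ?thesis using \<open>x i \<noteq> x j\<close> g[of "x i - x j"] unfolding gradwh_def by simp
  qed
  have L: "ip_scal \<Lambda> V \<psi> (lap_h h dw \<Lambda> V x \<psi>) = 2 * (\<Sum>i\<in>\<Lambda>. \<Sum>j\<in>\<Lambda>. a i j * (\<psi> i * (\<psi> i - \<psi> j)))"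
  proof -
    have "ip_scal \<Lambda> V \<psi> (lap_h h dw \<Lambda> V x \<psi>) = 2 * (\<Sum>i\<in>\<Lambda>. \<Sum>j\<in>\<Lambda>-{i}. a i j * (\<psi> i * (\<psi> i - \<psi> j)))"
      unfolding ip_scal_def lap_h_def sum_distrib_left
      apply (rule sum.cong, simp)
      apply (rule sum.cong, simp)
      apply (subst e)
        apply auto[3]
      apply (simp add: a_def)
      done
    also have "\<dots> = 2 * (\<Sum>i\<in>\<Lambda>. \<Sum>j\<in>\<Lambda>. a i j * (\<psi> i * (\<psi> i - \<psi> j)))"
      using fin by (simp add: sum_diff1 aii)
    finally show ?thesis .
  qed
  have Ssq: "(semi1 h dw \<Lambda> V x \<psi>)\<^sup>2 = (\<Sum>i\<in>\<Lambda>. \<Sum>j\<in>\<Lambda>. - a i j * (\<psi> i - \<psi> j)\<^sup>2)"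
  proof -
    have eq: "(\<Sum>i\<in>\<Lambda>. V i * (\<Sum>j\<in>\<Lambda> - {i}. V j * ((\<psi> i - \<psi> j)\<^sup>2 / norm (x i - x j))
       * \<bar>dwh CARD('n) h dw (norm (x i - x j))\<bar>)) = (\<Sum>i\<in>\<Lambda>. \<Sum>j\<in>\<Lambda>. - a i j * (\<psi> i - \<psi> j)\<^sup>2)"
    proof -
      have "(\<Sum>i\<in>\<Lambda>. V i * (\<Sum>j\<in>\<Lambda> - {i}. V j * ((\<psi> i - \<psi> j)\<^sup>2 / norm (x i - x j))
       * \<bar>dwh CARD('n) h dw (norm (x i - x j))\<bar>)) = (\<Sum>i\<in>\<Lambda>. \<Sum>j\<in>\<Lambda>-{i}. - a i j * (\<psi> i - \<psi> j)\<^sup>2)"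
        unfolding sum_distrib_left
      proof (rule sum.cong, simp, rule sum.cong, simp)
        fix i j assume "i \<in> \<Lambda>" "j \<in> \<Lambda> - {i}"
        then have "x i \<noteq> x j" using inj by (metis DiffE inj_onD singletonI)
        then have "norm (x i - x j) > 0" by simp
        then have "\<bar>dwh CARD('n) h dw (norm (x i - x j))\<bar> = - dwh CARD('n) h dw (norm (x i - x j))"
          using dwn by simp
        then show "V i * (V j * ((\<psi> i - \<psi> j)\<^sup>2 / norm (x i - x j)) * \<bar>dwh CARD('n) h dw (norm (x i - x j))\<bar>)
             = - a i j * (\<psi> i - \<psi> j)\<^sup>2" unfolding a_def by simp
      qed
      also have "\<dots> = (\<Sum>i\<in>\<Lambda>. \<Sum>j\<in>\<Lambda>. - a i j * (\<psi> i - \<psi> j)\<^sup>2)"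
        using fin by (simp add: sum_diff1 aii)
      finally show ?thesis .
    qed
    have nn: "0 \<le> (\<Sum>i\<in>\<Lambda>. V i * (\<Sum>j\<in>\<Lambda> - {i}. V j * ((\<psi> i - \<psi> j)\<^sup>2 / norm (x i - x j))
       * \<bar>dwh CARD('n) h dw (norm (x i - x j))\<bar>))"
      using Vp by (intro sum_nonneg mult_nonneg_nonneg) (auto intro!: sum_nonneg mult_nonneg_nonneg less_imp_le)
    show ?thesis unfolding semi1_def using nn eq by simp
  qed
  define S where "S = (\<Sum>i\<in>\<Lambda>. \<Sum>j\<in>\<Lambda>. a i j * (\<psi> i * (\<psi> i - \<psi> j)))"
  have S2: "S = (\<Sum>i\<in>\<Lambda>. \<Sum>j\<in>\<Lambda>. a i j * (\<psi> j * (\<psi> j - \<psi> i)))"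
    unfolding S_def by (subst sum.swap) (simp add: asym)
  have D: "(\<Sum>i\<in>\<Lambda>. \<Sum>j\<in>\<Lambda>. a i j * (\<psi> i * (\<psi> i - \<psi> j))) + (\<Sum>i\<in>\<Lambda>. \<Sum>j\<in>\<Lambda>. a i j * (\<psi> j * (\<psi> j - \<psi> i)))
     = (\<Sum>i\<in>\<Lambda>. \<Sum>j\<in>\<Lambda>. a i j * (\<psi> i * (\<psi> i - \<psi> j)) + a i j * (\<psi> j * (\<psi> j - \<psi> i)))"
    by (simp only: sum.distrib)
  also have "\<dots> = (\<Sum>i\<in>\<Lambda>. \<Sum>j\<in>\<Lambda>. a i j * (\<psi> i - \<psi> j)\<^sup>2)"
    by (intro sum.cong refl) (simp add: power2_eq_square algebra_simps)
  finally have "2 * S = (\<Sum>i\<in>\<Lambda>. \<Sum>j\<in>\<Lambda>. a i j * (\<psi> i - \<psi> j)\<^sup>2)"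
    using S_def S2 by simp
  then show ?thesis using L Ssq S_def by (simp add: sum_negf)
qed

theorem lemma3:
  fixes w dw :: "real \<Rightarrow> real" and r0 h :: real
    and N k :: nat and V :: "nat \<Rightarrow> real" and X :: "nat \<Rightarrow> nat \<Rightarrow> real^'n"
    and \<Lambda> :: "nat set" and \<phi> :: "nat \<Rightarrow> real^'n" and \<psi> :: "nat \<Rightarrow> real"
  assumes dim: "CARD('n) = 2 \<or> CARD('n) = 3"
    and w_deriv: "\<forall>r\<ge>0. (w has_real_derivative dw r) (at r within {0..})"
    and w_C2: "\<exists>ddw. (\<forall>r\<ge>0. (dw has_real_derivative ddw r) (at r within {0..}))
                    \<and> continuous_on {0..} ddw"
    and r0_pos: "r0 > 0"
    and w_pos: "\<forall>r. 0 < r \<and> r < r0 \<longrightarrow> w r > 0"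
    and w_zero: "\<forall>r\<ge>r0. w r = 0"
    and dw_neg: "\<forall>r. 0 < r \<and> r < r0 \<longrightarrow> dw r < 0"
    and dw_0: "dw 0 = 0"
    and dw_zero: "\<forall>r\<ge>r0. dw r = 0"
    and w_int: "((\<lambda>x::real^'n. w (norm x)) has_integral 1) UNIV"
    and h_pos: "h > 0"
    and V_pos: "\<forall>i\<in>{1..N}. V i > 0"
    and distinct: "inj_on (X k) {1..N}"
    and Lam: "\<Lambda> \<subseteq> {1..N}"
  shows "ip_scal \<Lambda> V \<psi> (div_h h dw \<Lambda> V (X k) \<phi>)
           = - ip_vec \<Lambda> V (grad_h h dw \<Lambda> V (X k) \<psi>) \<phi>
       \<and> - ip_scal \<Lambda> V \<psi> (lap_h h dw \<Lambda> V (X k) \<psi>) = (semi1 h dw \<Lambda> V (X k) \<psi>)\<^sup>2"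
proof
  have fin: "finite \<Lambda>" using Lam finite_subset by blast
  show "ip_scal \<Lambda> V \<psi> (div_h h dw \<Lambda> V (X k) \<phi>) = - ip_vec \<Lambda> V (grad_h h dw \<Lambda> V (X k) \<psi>) \<phi>"
    by (rule part1[OF fin])
  have dwn: "\<forall>r>0. dwh CARD('n) h dw r \<le> 0"
  proof (intro allI impI)
    fix r :: real assume "r > 0"
    then have "r / h > 0" using h_pos by simp
    then have "dw (r/h) \<le> 0" using dw_neg dw_zero by (cases "r/h < r0") (auto intro: less_imp_le)
    then show "dwh CARD('n) h dw r \<le> 0" unfolding dwh_def using h_pos
      by (simp add: divide_nonpos_pos)
  qed
  show "- ip_scal \<Lambda> V \<psi> (lap_h h dw \<Lambda> V (X k) \<psi>) = (semi1 h dw \<Lambda> V (X k) \<psi>)\<^sup>2"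
    by (rule part2[OF fin inj_on_subset[OF distinct Lam]]) (use V_pos Lam dwn in auto)
qed

end
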